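(* Let $d\ge4$ and $\alpha\in(0,\frac12)$ with $(d+1)\alpha\in\mathbb{Z}$. Let $e$ span the kernel of $Q_\alpha$ on $\mathbb{C}^{\mathcal A_d}$, let $SU^*(Q_\alpha)$ be the group of linear automorphisms of $\mathbb{C}^{\mathcal A_d}$ of determinant $1$ that preserve $Q_\alpha$ and fix $e$, and let $D$ be the subgroup of $SU^*(Q_\alpha)$ consisting of the elements that map the hyperplane $H_{1-d}=\mathrm{span}\{e_q:q\ne 1-d\}$ into itself. Then any subgroup of $SU^*(Q_\alpha)$ containing $D$ is equal to $D$ or to $SU^*(Q_\alpha)$.
   Context: $\mathcal A_d=\{1-d,3-d,\dots,d-1\}$, $(e_q)_{q\in\mathcal A_d}$ the canonical basis of $\mathbb{C}^{\mathcal A_d}$, $\zeta=e^{-2\pi i\alpha}$. $Q_\alpha$ is the hermitian form on $\mathbb{C}^{\mathcal A_d}$ (linear in the first argument, conjugate-linear in the second) with $Q_\alpha(e_p,e_p)=1$ and $Q_\alpha(e_p,e_{p'})=(1+\zeta)^{-1}=\frac12(1+i\tan\pi\alpha)$ for $p>p'$. Under the hypothesis $(d+1)\alpha\in\mathbb{Z}$, the kernel of $Q_\alpha$ is one-dimensional and is not contained in $H_{1-d}$, so in the basis $(e,e_{3-d},\dots,e_{d-1})$ elements of $SU^*(Q_\alpha)$ have block form $\begin{pmatrix}1&v\\0&g\end{pmatrix}$, and $D$ consists of those with $v=0$. *)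

theory Defs
  imports "Jordan_Normal_Form.Determinant" "HOL-Algebra.Group"
begin

text \<open>The index set A_d = {1-d, 3-d, ..., d-1} is enumerated increasingly by
  k = 0..d-1 via q = 2k+1-d. So C^{A_d} is carrier_vec d, index 0 is q = 1-d,
  and p > p' in A_d iff the corresponding indices satisfy k > k'.\<close>

definition zeta :: "real \<Rightarrow> complex" where
  "zeta \<alpha> = exp (- 2 * pi * \<i> * complex_of_real \<alpha>)"

definition gramQ :: "real \<Rightarrow> nat \<Rightarrow> nat \<Rightarrow> complex" where
  "gramQ \<alpha> i j = (if i = j then 1
                   else if i > j then 1 / (1 + zeta \<alpha>)
                   else cnj (1 / (1 + zeta \<alpha>)))"

definition Qform :: "nat \<Rightarrow> real \<Rightarrow> complex vec \<Rightarrow> complex vec \<Rightarrow> complex" where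
  "Qform d \<alpha> x y = (\<Sum>i<d. \<Sum>j<d. x $ i * cnj (y $ j) * gramQ \<alpha> i j)"

definition kerQ :: "nat \<Rightarrow> real \<Rightarrow> complex vec set" where
  "kerQ d \<alpha> = {x \<in> carrier_vec d. \<forall>y \<in> carrier_vec d. Qform d \<alpha> x y = 0}"

definition SUstar :: "nat \<Rightarrow> real \<Rightarrow> complex vec \<Rightarrow> complex mat set" where
  "SUstar d \<alpha> e = {g \<in> carrier_mat d d. det g = 1
       \<and> (\<forall>x \<in> carrier_vec d. \<forall>y \<in> carrier_vec d. Qform d \<alpha> (g *\<^sub>v x) (g *\<^sub>v y) = Qform d \<alpha> x y)
       \<and> g *\<^sub>v e = e}"

definition hypH :: "nat \<Rightarrow> complex vec set" where
  "hypH d = {x \<in> carrier_vec d. x $ 0 = 0}"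

definition Dgrp :: "nat \<Rightarrow> real \<Rightarrow> complex vec \<Rightarrow> complex mat set" where
  "Dgrp d \<alpha> e = {g \<in> SUstar d \<alpha> e. \<forall>x \<in> hypH d. g *\<^sub>v x \<in> hypH d}"

definition SUstar_group :: "nat \<Rightarrow> real \<Rightarrow> complex vec \<Rightarrow> complex mat monoid" where
  "SUstar_group d \<alpha> e = \<lparr>carrier = SUstar d \<alpha> e, mult = (*), one = 1\<^sub>m d\<rparr>"

end

theory Submission
  imports Defs
begin


lemma gram_herm: "gramQ \<alpha> j i = cnj (gramQ \<alpha> i j)"
  unfolding gramQ_def by auto

lemma Q_herm: "Qform d \<alpha> x y = cnj (Qform d \<alpha> y x)"
proof -
  have "cnj (Qform d \<alpha> y x) = (\<Sum>i<d. \<Sum>j<d. cnj (y $ i * cnj (x $ j) * gramQ \<alpha> i j))"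
    unfolding Qform_def by simp
  also have "\<dots> = (\<Sum>j<d. \<Sum>i<d. cnj (y $ i * cnj (x $ j) * gramQ \<alpha> i j))"
    by (rule sum.swap)
  also have "\<dots> = (\<Sum>j<d. \<Sum>i<d. x $ j * cnj (y $ i) * gramQ \<alpha> j i)"
  proof (intro sum.cong refl)
    fix i j
    show "cnj (y $ i * cnj (x $ j) * gramQ \<alpha> i j) = x $ j * cnj (y $ i) * gramQ \<alpha> j i"
      using gram_herm[of \<alpha> j i] by simp
  qed
  also have "\<dots> = Qform d \<alpha> x y" unfolding Qform_def ..
  finally show ?thesis by simp
qed

lemma Q_add_left: assumes "x \<in> carrier_vec d" "y \<in> carrier_vec d"
  shows "Qform d \<alpha> (x + y) z = Qform d \<alpha> x z + Qform d \<alpha> y z"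
proof -
  have "Qform d \<alpha> (x + y) z = (\<Sum>i<d. (\<Sum>j<d. x $ i * cnj (z $ j) * gramQ \<alpha> i j) + (\<Sum>j<d. y $ i * cnj (z $ j) * gramQ \<alpha> i j))"
    unfolding Qform_def sum.distrib[symmetric] using assms by (intro sum.cong refl) (simp add: distrib_right)
  also have "\<dots> = Qform d \<alpha> x z + Qform d \<alpha> y z" unfolding Qform_def by (rule sum.distrib)
  finally show ?thesis .
qed

lemma Q_smult_left: assumes "x \<in> carrier_vec d"
  shows "Qform d \<alpha> (c \<cdot>\<^sub>v x) z = c * Qform d \<alpha> x z"
proof -
  have "Qform d \<alpha> (c \<cdot>\<^sub>v x) z = (\<Sum>i<d. c * (\<Sum>j<d. x $ i * cnj (z $ j) * gramQ \<alpha> i j))"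
    unfolding Qform_def sum_distrib_left using assms by (intro sum.cong refl) (simp add: mult.assoc)
  also have "\<dots> = c * Qform d \<alpha> x z" unfolding Qform_def by (rule sum_distrib_left[symmetric])
  finally show ?thesis .
qed

lemma Q_add_right: assumes "x \<in> carrier_vec d" "y \<in> carrier_vec d"
  shows "Qform d \<alpha> z (x + y) = Qform d \<alpha> z x + Qform d \<alpha> z y"
proof -
  have "Qform d \<alpha> z (x + y) = cnj (Qform d \<alpha> (x + y) z)" by (rule Q_herm)
  also have "\<dots> = cnj (Qform d \<alpha> x z) + cnj (Qform d \<alpha> y z)" using Q_add_left[OF assms] by simp
  also have "\<dots> = Qform d \<alpha> z x + Qform d \<alpha> z y" using Q_herm[of d \<alpha> z x] Q_herm[of d \<alpha> z y] by simp
  finally show ?thesis .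
qed

lemma Q_smult_right: assumes "x \<in> carrier_vec d"
  shows "Qform d \<alpha> z (c \<cdot>\<^sub>v x) = cnj c * Qform d \<alpha> z x"
proof -
  have "Qform d \<alpha> z (c \<cdot>\<^sub>v x) = cnj (Qform d \<alpha> (c \<cdot>\<^sub>v x) z)" by (rule Q_herm)
  also have "\<dots> = cnj c * cnj (Qform d \<alpha> x z)" using Q_smult_left[OF assms] by simp
  also have "\<dots> = cnj c * Qform d \<alpha> z x" using Q_herm[of d \<alpha> z x] by simp
  finally show ?thesis .
qed

lemma Q_minus_left: assumes "x \<in> carrier_vec d" "y \<in> carrier_vec d"
  shows "Qform d \<alpha> (x - y) z = Qform d \<alpha> x z - Qform d \<alpha> y z"
proof -
  have "x - y = x + (-1) \<cdot>\<^sub>v y" using assms by auto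
  thus ?thesis using assms by (simp add: Q_add_left Q_smult_left)
qed

lemma Q_minus_right: assumes "x \<in> carrier_vec d" "y \<in> carrier_vec d"
  shows "Qform d \<alpha> z (x - y) = Qform d \<alpha> z x - Qform d \<alpha> z y"
proof -
  have "x - y = x + (-1) \<cdot>\<^sub>v y" using assms by auto
  thus ?thesis using assms by (simp add: Q_add_right Q_smult_right)
qed

lemma Q_zero_left: "Qform d \<alpha> (0\<^sub>v d) z = 0"
  unfolding Qform_def by simp

lemma Q_zero_right: "Qform d \<alpha> z (0\<^sub>v d) = 0"
  unfolding Qform_def by simp

lemma Q_real: "cnj (Qform d \<alpha> x x) = Qform d \<alpha> x x"
  using Q_herm[of d \<alpha> x x] by simp

lemma Q_unit_expand: assumes "x \<in> carrier_vec d"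
  shows "Qform d \<alpha> x y = (\<Sum>j<d. x $ j * Qform d \<alpha> (unit_vec d j) y)"
proof -
  have "Qform d \<alpha> (unit_vec d j) y = (\<Sum>l<d. cnj (y $ l) * gramQ \<alpha> j l)" if "j < d" for j
  proof -
    have "Qform d \<alpha> (unit_vec d j) y = (\<Sum>i<d. \<Sum>l<d. (if i = j then cnj (y $ l) * gramQ \<alpha> i l else 0))"
      unfolding Qform_def using that by (intro sum.cong refl) auto
    also have "\<dots> = (\<Sum>l<d. cnj (y $ l) * gramQ \<alpha> j l)"
      by (subst sum.swap) (simp add: that)
    finally show ?thesis .
  qed
  hence "(\<Sum>j<d. x $ j * Qform d \<alpha> (unit_vec d j) y) = (\<Sum>j<d. x $ j * (\<Sum>l<d. cnj (y $ l) * gramQ \<alpha> j l))"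
    by (intro sum.cong) auto
  also have "\<dots> = Qform d \<alpha> x y" unfolding Qform_def sum_distrib_left
    by (intro sum.cong refl) (simp add: mult.assoc)
  finally show ?thesis by simp
qed


definition cc :: "real \<Rightarrow> complex" where "cc \<alpha> = 1 / (1 + zeta \<alpha>)"

lemma zeta_ne: assumes "0 < \<alpha>" "\<alpha> < 1/2" shows "1 + zeta \<alpha> \<noteq> 0"
proof
  assume h: "1 + zeta \<alpha> = 0"
  have "Im (zeta \<alpha>) = - sin (2 * pi * \<alpha>)"
    unfolding zeta_def by (simp add: Im_exp)
  moreover have "sin (2 * pi * \<alpha>) > 0" using assms by (intro sin_gt_zero) auto
  moreover have "Im (zeta \<alpha>) = 0" using arg_cong[OF h, of Im] by simp
  ultimately show False by simp
qed

lemma cc_sum: assumes "1 + zeta \<alpha> \<noteq> 0" shows "cc \<alpha> + cnj (cc \<alpha>) = 1"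
proof -
  let ?z = "zeta \<alpha>"
  have nz: "cmod ?z = 1" unfolding zeta_def by (simp add: norm_exp_eq_Re)
  have cz: "cnj ?z * ?z = 1" using complex_norm_square[of ?z] nz by (simp add: mult.commute)
  have z0: "?z \<noteq> 0" unfolding zeta_def by simp
  have "cnj (cc \<alpha>) = 1 / (1 + cnj ?z)" unfolding cc_def by simp
  also have "1 + cnj ?z = (?z + 1) / ?z" using cz z0 by (simp add: field_simps)
  finally have "cnj (cc \<alpha>) = ?z / (1 + ?z)" using z0 assms by (simp add: add.commute)
  thus ?thesis unfolding cc_def using assms by (simp add: field_simps)
qed

lemma cc_nz: assumes "1 + zeta \<alpha> \<noteq> 0" shows "cc \<alpha> \<noteq> 0"
  unfolding cc_def using assms by simp

lemma gram_vals:
  "gramQ \<alpha> i i = 1" "i > j \<Longrightarrow> gramQ \<alpha> i j = cc \<alpha>" "i < j \<Longrightarrow> gramQ \<alpha> i j = cnj (cc \<alpha>)"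
  unfolding gramQ_def cc_def by auto

lemma Q_unit_right: assumes "x \<in> carrier_vec d" "j < d"
  shows "Qform d \<alpha> x (unit_vec d j) = (\<Sum>i<d. x $ i * gramQ \<alpha> i j)"
proof -
  have "Qform d \<alpha> x (unit_vec d j) = (\<Sum>i<d. \<Sum>l<d. (if l = j then x $ i * gramQ \<alpha> i l else 0))"
    unfolding Qform_def using assms by (intro sum.cong refl) auto
  also have "\<dots> = (\<Sum>i<d. x $ i * gramQ \<alpha> i j)" using assms by simp
  finally show ?thesis .
qed

lemma kernel_zero: assumes cs: "cc \<alpha> + cnj (cc \<alpha>) = 1" and c0: "cc \<alpha> \<noteq> 0"
  and x: "x \<in> carrier_vec d" and k: "\<forall>y\<in>carrier_vec d. Qform d \<alpha> x y = 0" and x0: "x $ 0 = 0"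
  shows "x = 0\<^sub>v d"
proof -
  let ?c = "cc \<alpha>"
  have cs1: "1 - cnj ?c = ?c" and cs2: "?c - 1 = - cnj ?c" using cs by (simp_all add: algebra_simps)
  have step: "cc \<alpha> * x $ j = cnj (cc \<alpha>) * x $ (Suc j)" if j: "Suc j < d" for j
  proof -
    have "(\<Sum>i<d. x $ i * gramQ \<alpha> i j) - (\<Sum>i<d. x $ i * gramQ \<alpha> i (Suc j)) = 0"
      using k Q_unit_right[OF x, of j \<alpha>] Q_unit_right[OF x, of "Suc j" \<alpha>] j by auto
    also have "(\<Sum>i<d. x $ i * gramQ \<alpha> i j) - (\<Sum>i<d. x $ i * gramQ \<alpha> i (Suc j))
      = (\<Sum>i<d. (if i = j then ?c * x $ i else 0) - (if i = Suc j then cnj ?c * x $ i else 0))"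
      unfolding sum_subtractf[symmetric]
    proof (intro sum.cong refl)
      fix i assume "i \<in> {..<d}"
      show "x $ i * gramQ \<alpha> i j - x $ i * gramQ \<alpha> i (Suc j) =
        (if i = j then ?c * x $ i else 0) - (if i = Suc j then cnj ?c * x $ i else 0)"
      proof (cases "i < j")
        case True thus ?thesis by (simp add: gram_vals)
      next
        case False
        show ?thesis
        proof (cases "i = j")
          case True
          hence "x $ i * gramQ \<alpha> i j - x $ i * gramQ \<alpha> i (Suc j) = x $ i * (1 - cnj ?c)"
            by (simp add: gram_vals right_diff_distrib)
          thus ?thesis using True cs1 by simp
        next
          case f2: False
          show ?thesis
          proof (cases "i = Suc j")
            case True
            hence "x $ i * gramQ \<alpha> i j - x $ i * gramQ \<alpha> i (Suc j) = x $ i * (?c - 1)"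
              by (simp add: gram_vals right_diff_distrib)
            thus ?thesis using True cs2 by simp
          next
            case False thus ?thesis using f2 \<open>\<not> i < j\<close> by (simp add: gram_vals)
          qed
        qed
      qed
    qed
    also have "\<dots> = ?c * x $ j - cnj ?c * x $ Suc j"
      unfolding sum_subtractf using j by simp
    finally show ?thesis by simp
  qed
  have "x $ j = 0" if "j < d" for j
    using that
  proof (induction j)
    case 0 thus ?case using x0 by simp
  next
    case (Suc j)
    hence "cc \<alpha> * x $ j = cnj (cc \<alpha>) * x $ (Suc j)" by (intro step)
    moreover have "x $ j = 0" using Suc by simp
    moreover have "cnj (cc \<alpha>) \<noteq> 0" using c0 by simp
    ultimately show ?case by simp
  qed
  thus ?thesis using x by (intro eq_vecI) auto
qed


lemma mdl: fixes a b :: "'a :: idom vec"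
  assumes a: "a \<in> carrier_vec n" and b: "b \<in> carrier_vec n"
  shows "det (1\<^sub>m n + mat n n (\<lambda>(i,j). a $ i * b $ j)) = 1 + b \<bullet> a"
proof -
  define Ca where "Ca = mat n 1 (\<lambda>(i,j). a $ i)"
  define Rb where "Rb = mat 1 n (\<lambda>(i,j). b $ j)"
  have Ca: "Ca \<in> carrier_mat n 1" and Rb: "Rb \<in> carrier_mat 1 n" unfolding Ca_def Rb_def by auto
  define X where "X = four_block_mat (1\<^sub>m n) Ca (- Rb) (1\<^sub>m 1)"
  define U where "U = four_block_mat (1\<^sub>m n) (- Ca) (0\<^sub>m 1 n) (1\<^sub>m 1)"
  define L where "L = four_block_mat (1\<^sub>m n) (0\<^sub>m n 1) Rb (1\<^sub>m 1)"
  have X: "X \<in> carrier_mat (n+1) (n+1)" unfolding X_def using Ca Rb by (intro four_block_carrier_mat) auto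
  have U: "U \<in> carrier_mat (n+1) (n+1)" unfolding U_def using Ca Rb by (intro four_block_carrier_mat) auto
  have L: "L \<in> carrier_mat (n+1) (n+1)" unfolding L_def using Ca Rb by (intro four_block_carrier_mat) auto
  have RbCa: "Rb * Ca = mat 1 1 (\<lambda>_. b \<bullet> a)"
    unfolding Rb_def Ca_def using a b by (intro eq_matI) (auto simp: scalar_prod_def row_def col_def)
  have CaRb: "Ca * Rb = mat n n (\<lambda>(i,j). a $ i * b $ j)"
    unfolding Rb_def Ca_def using a b by (intro eq_matI) (auto simp: scalar_prod_def row_def col_def)
  have mCa: "- Ca \<in> carrier_mat n 1" and mRb: "- Rb \<in> carrier_mat 1 n" using Ca Rb by auto
  have o1: "1\<^sub>m n \<in> carrier_mat n n" "1\<^sub>m 1 \<in> carrier_mat 1 1" "0\<^sub>m 1 n \<in> carrier_mat 1 n" "0\<^sub>m n 1 \<in> carrier_mat n 1" by auto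
  have XU: "X * U = four_block_mat (1\<^sub>m n) (0\<^sub>m n 1) (- Rb) (1\<^sub>m 1 + Rb * Ca)"
    unfolding X_def U_def
    by (subst mult_four_block_mat[OF o1(1) Ca mRb o1(2) o1(1) mCa o1(3) o1(2)]) (use Ca Rb in auto)
  have XL: "X * L = four_block_mat (1\<^sub>m n + Ca * Rb) Ca (0\<^sub>m 1 n) (1\<^sub>m 1)"
    unfolding X_def L_def
    by (subst mult_four_block_mat[OF o1(1) Ca mRb o1(2) o1(1) o1(4) Rb o1(2)]) (use Ca Rb in auto)
  have dU: "det U = 1" unfolding U_def
    by (subst det_four_block_mat_lower_left_zero[of _ n _ 1]) (use Ca in auto)
  have dL: "det L = 1" unfolding L_def
    by (subst det_four_block_mat_upper_right_zero[of _ n _ 1]) (use Rb in auto)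
  have "det (X * U) = det (1\<^sub>m 1 + Rb * Ca)"
    unfolding XU by (subst det_four_block_mat_upper_right_zero[of _ n _ 1]) (use Ca Rb in auto)
  also have "\<dots> = 1 + b \<bullet> a" unfolding RbCa by (subst det_single) auto
  finally have 1: "det X = 1 + b \<bullet> a" using det_mult[OF X U] dU by simp
  have "det (X * L) = det (1\<^sub>m n + Ca * Rb)"
    unfolding XL by (subst det_four_block_mat_lower_left_zero[of _ n _ 1]) (use Ca Rb in auto)
  hence "det X = det (1\<^sub>m n + Ca * Rb)" using det_mult[OF X L] dL by simp
  thus ?thesis using 1 CaRb by simp
qed


locale setting =
  fixes d :: nat and \<alpha> :: real and e :: "complex vec"
  assumes d4: "d \<ge> 4" and cs: "cc \<alpha> + cnj (cc \<alpha>) = 1" and c0: "cc \<alpha> \<noteq> 0"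
    and e_car: "e \<in> carrier_vec d" and e_nz: "e \<noteq> 0\<^sub>v d"
    and ker: "kerQ d \<alpha> = {c \<cdot>\<^sub>v e | c. True}"
begin

abbreviation "Q \<equiv> Qform d \<alpha>"
abbreviation "H \<equiv> hypH d"

lemma e_radical: "y \<in> carrier_vec d \<Longrightarrow> Q e y = 0"
proof -
  assume y: "y \<in> carrier_vec d"
  have "e = 1 \<cdot>\<^sub>v e" by simp
  hence "e \<in> kerQ d \<alpha>" using ker by blast
  thus ?thesis using y unfolding kerQ_def by auto
qed

lemma e_radical': "y \<in> carrier_vec d \<Longrightarrow> Q y e = 0"
  using e_radical[of y] Q_herm[of d \<alpha> y e] by simp

lemma e0: "e $ 0 \<noteq> 0"
  using kernel_zero[OF cs c0 e_car] e_radical e_nz by blast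

lemma ker_mem: assumes "x \<in> carrier_vec d" "\<forall>y\<in>carrier_vec d. Q x y = 0"
  shows "\<exists>c. x = c \<cdot>\<^sub>v e"
proof -
  have "x \<in> kerQ d \<alpha>" using assms unfolding kerQ_def by auto
  thus ?thesis using ker by auto
qed

definition proj :: "complex vec \<Rightarrow> complex vec" where
  "proj x = x - (x $ 0 / e $ 0) \<cdot>\<^sub>v e"

lemma proj_car: "x \<in> carrier_vec d \<Longrightarrow> proj x \<in> carrier_vec d"
  unfolding proj_def using e_car by auto

lemma d0: "0 < d" using d4 by simp

lemma proj_H: "x \<in> carrier_vec d \<Longrightarrow> proj x \<in> H"
  unfolding proj_def hypH_def using e_car e0 d0 by auto

lemma Q_proj_right: assumes "x \<in> carrier_vec d" "y \<in> carrier_vec d"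
  shows "Q y (proj x) = Q y x"
  unfolding proj_def using assms e_car
  by (simp add: Q_minus_right Q_smult_right e_radical')

lemma Q_proj_left: assumes "x \<in> carrier_vec d" "y \<in> carrier_vec d"
  shows "Q (proj x) y = Q x y"
  unfolding proj_def using assms e_car
  by (simp add: Q_minus_left Q_smult_left e_radical)

lemma H_car: "x \<in> H \<Longrightarrow> x \<in> carrier_vec d" unfolding hypH_def by auto
lemma H_0: "x \<in> H \<Longrightarrow> x $ 0 = 0" unfolding hypH_def by auto

lemma nondeg: assumes y: "y \<in> H" and h: "\<forall>h\<in>H. Q y h = 0" shows "y = 0\<^sub>v d"
proof -
  have yc: "y \<in> carrier_vec d" using y H_car by auto
  have "\<forall>x\<in>carrier_vec d. Q y x = 0"
    using h proj_H Q_proj_right yc by metis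
  then obtain c where c: "y = c \<cdot>\<^sub>v e" using ker_mem yc by blast
  have "y $ 0 = c * e $ 0" using c e_car d0 by auto
  hence "c = 0" using H_0[OF y] e0 by simp
  thus ?thesis using c e_car by auto
qed

lemma nondeg': assumes y: "y \<in> H" and h: "\<forall>h\<in>H. Q h y = 0" shows "y = 0\<^sub>v d"
  using nondeg[OF y] h Q_herm[of d \<alpha> y] by fastforce

end


lemma add_zero_smult[simp]: "v \<in> carrier_vec n \<Longrightarrow> w \<in> carrier_vec n \<Longrightarrow> v + (0 :: 'a :: comm_ring_1) \<cdot>\<^sub>v w = v"
  by (intro eq_vecI) auto

lemma mat_vec_unit: fixes A :: "'a :: comm_ring_1 mat" assumes "A \<in> carrier_mat n n" "i < n" "j < n"
  shows "(A *\<^sub>v unit_vec n j) $ i = A $$ (i, j)"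
proof -
  have "(A *\<^sub>v unit_vec n j) $ i = (\<Sum>k\<in>{0..<n}. A $$ (i, k) * (if k = j then 1 else 0))"
    using assms by (simp add: scalar_prod_def row_def)
  also have "\<dots> = A $$ (i, j)" using assms by (simp add: if_distrib cong: if_cong)
  finally show ?thesis .
qed

lemma mat_eqI_vec: fixes A B :: "'a :: comm_ring_1 mat" assumes "A \<in> carrier_mat n n" "B \<in> carrier_mat n n"
  and "\<And>x. x \<in> carrier_vec n \<Longrightarrow> A *\<^sub>v x = B *\<^sub>v x"
  shows "A = B"
proof (rule eq_matI)
  fix i j assume "i < dim_row B" "j < dim_col B"
  hence ij: "i < n" "j < n" using assms by auto
  show "A $$ (i, j) = B $$ (i, j)"
    using mat_vec_unit[OF assms(1) ij] mat_vec_unit[OF assms(2) ij] assms(3)[of "unit_vec n j"] by simp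
qed (use assms in auto)

context setting begin

definition T :: "complex vec \<Rightarrow> complex vec \<Rightarrow> complex mat" where
  "T a y = 1\<^sub>m d + mat d d (\<lambda>(i,j). a $ i * Q (unit_vec d j) y)"

lemma T_car[simp]: "T a y \<in> carrier_mat d d" unfolding T_def by auto

lemma T_vec: assumes a: "a \<in> carrier_vec d" and x: "x \<in> carrier_vec d"
  shows "T a y *\<^sub>v x = x + Q x y \<cdot>\<^sub>v a"
proof -
  have "T a y *\<^sub>v x = x + mat d d (\<lambda>(i,j). a $ i * Q (unit_vec d j) y) *\<^sub>v x"
    unfolding T_def using x by (subst add_mult_distrib_mat_vec[of _ d d]) auto
  also have "mat d d (\<lambda>(i,j). a $ i * Q (unit_vec d j) y) *\<^sub>v x = Q x y \<cdot>\<^sub>v a"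
  proof (rule eq_vecI)
    fix i assume "i < dim_vec (Q x y \<cdot>\<^sub>v a)"
    hence i: "i < d" using a by simp
    have "(mat d d (\<lambda>(i,j). a $ i * Q (unit_vec d j) y) *\<^sub>v x) $ i
       = (\<Sum>j\<in>{0..<d}. a $ i * Q (unit_vec d j) y * x $ j)"
      using i x by (simp add: scalar_prod_def row_def)
    also have "\<dots> = a $ i * (\<Sum>j<d. x $ j * Q (unit_vec d j) y)"
      by (simp add: sum_distrib_left atLeast0LessThan mult.commute mult.left_commute)
    also have "\<dots> = a $ i * Q x y" using Q_unit_expand[OF x] by simp
    finally show "(mat d d (\<lambda>(i,j). a $ i * Q (unit_vec d j) y) *\<^sub>v x) $ i = (Q x y \<cdot>\<^sub>v a) $ i"
      using i a by (simp add: mult.commute)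
  qed (use a in auto)
  finally show ?thesis .
qed

lemma T_det: assumes a: "a \<in> carrier_vec d"
  shows "det (T a y) = 1 + Q a y"
proof -
  define b where "b = vec d (\<lambda>j. Q (unit_vec d j) y)"
  have b: "b \<in> carrier_vec d" unfolding b_def by auto
  have "T a y = 1\<^sub>m d + mat d d (\<lambda>(i,j). a $ i * b $ j)"
    unfolding T_def b_def by (intro arg_cong2[where f="(+)"] refl eq_matI) auto
  hence "det (T a y) = 1 + b \<bullet> a" using mdl[OF a b] by simp
  also have "b \<bullet> a = Q a y" unfolding Q_unit_expand[OF a] using a
    by (simp add: b_def scalar_prod_def atLeast0LessThan mult.commute)
  finally show ?thesis .
qed

definition N :: "complex vec \<Rightarrow> complex mat" where "N y = T e y"

lemma N_car[simp]: "N y \<in> carrier_mat d d" unfolding N_def by simp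

lemma N_vec: "x \<in> carrier_vec d \<Longrightarrow> N y *\<^sub>v x = x + Q x y \<cdot>\<^sub>v e"
  unfolding N_def using T_vec e_car by simp

lemma N_det: "y \<in> carrier_vec d \<Longrightarrow> det (N y) = 1"
  unfolding N_def using T_det e_car e_radical by simp

lemma N_Q: assumes "x \<in> carrier_vec d" "x' \<in> carrier_vec d"
  shows "Q (N y *\<^sub>v x) (N y *\<^sub>v x') = Q x x'"
  using assms e_car
  by (simp add: N_vec Q_add_left Q_add_right Q_smult_left Q_smult_right e_radical e_radical')

lemma N_e: "y \<in> carrier_vec d \<Longrightarrow> N y *\<^sub>v e = e"
  using e_car by (simp add: N_vec e_radical)

lemma N_S: "y \<in> carrier_vec d \<Longrightarrow> N y \<in> SUstar d \<alpha> e"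
  unfolding SUstar_def using N_det N_Q N_e by auto

end


context setting begin

abbreviation "S \<equiv> SUstar d \<alpha> e"
abbreviation "SG \<equiv> SUstar_group d \<alpha> e"
abbreviation "D \<equiv> Dgrp d \<alpha> e"

lemma S_car: "g \<in> S \<Longrightarrow> g \<in> carrier_mat d d" unfolding SUstar_def by auto
lemma S_det: "g \<in> S \<Longrightarrow> det g = 1" unfolding SUstar_def by auto
lemma S_Q: "g \<in> S \<Longrightarrow> x \<in> carrier_vec d \<Longrightarrow> y \<in> carrier_vec d \<Longrightarrow> Q (g *\<^sub>v x) (g *\<^sub>v y) = Q x y"
  unfolding SUstar_def by auto
lemma S_e: "g \<in> S \<Longrightarrow> g *\<^sub>v e = e" unfolding SUstar_def by auto

lemma S_mult: assumes g: "g \<in> S" and h: "h \<in> S" shows "g * h \<in> S"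
proof -
  have gc: "g \<in> carrier_mat d d" and hc: "h \<in> carrier_mat d d" using g h S_car by auto
  have "det (g * h) = 1" using det_mult[OF gc hc] S_det g h by simp
  moreover have "Q ((g * h) *\<^sub>v x) ((g * h) *\<^sub>v y) = Q x y" if "x \<in> carrier_vec d" "y \<in> carrier_vec d" for x y
    using that gc hc S_Q[OF g, of "h *\<^sub>v x" "h *\<^sub>v y"] S_Q[OF h, of x y] by simp
  moreover have "(g * h) *\<^sub>v e = e" using gc hc e_car S_e g h by simp
  ultimately show ?thesis unfolding SUstar_def using gc hc by auto
qed

lemma S_one: "1\<^sub>m d \<in> S" unfolding SUstar_def using e_car by auto

lemma S_inv: assumes g: "g \<in> S" shows "\<exists>g'\<in>S. g' * g = 1\<^sub>m d \<and> g * g' = 1\<^sub>m d"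
proof -
  have gc: "g \<in> carrier_mat d d" using g S_car by auto
  have "g \<in> Units (ring_mat TYPE(complex) d undefined)"
    using det_non_zero_imp_unit[OF gc] S_det[OF g] by simp
  then obtain g' where g'c: "g' \<in> carrier_mat d d" and gg: "g' * g = 1\<^sub>m d" "g * g' = 1\<^sub>m d"
    unfolding Units_def ring_mat_def by auto
  have "det g' = 1" using det_mult[OF gc g'c] gg S_det[OF g] by simp
  moreover have "Q (g' *\<^sub>v x) (g' *\<^sub>v y) = Q x y" if x: "x \<in> carrier_vec d" and y: "y \<in> carrier_vec d" for x y
  proof -
    have "Q (g' *\<^sub>v x) (g' *\<^sub>v y) = Q (g *\<^sub>v (g' *\<^sub>v x)) (g *\<^sub>v (g' *\<^sub>v y))"
      using S_Q[OF g, of "g' *\<^sub>v x" "g' *\<^sub>v y"] x y g'c by simp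
    also have "\<dots> = Q x y" using gc g'c x y gg
      by (simp add: assoc_mult_mat_vec[symmetric, of _ d d _ d])
    finally show ?thesis .
  qed
  moreover have "g' *\<^sub>v e = e"
  proof -
    have "g' *\<^sub>v e = g' *\<^sub>v (g *\<^sub>v e)" using S_e[OF g] by simp
    also have "\<dots> = e" using gc g'c gg e_car
      by (simp add: assoc_mult_mat_vec[symmetric, of _ d d _ d])
    finally show ?thesis .
  qed
  ultimately show ?thesis unfolding SUstar_def using g'c gg by auto
qed

lemma S_group: "group SG"
proof (rule groupI)
  show "\<And>x y. x \<in> carrier SG \<Longrightarrow> y \<in> carrier SG \<Longrightarrow> x \<otimes>\<^bsub>SG\<^esub> y \<in> carrier SG"
    unfolding SUstar_group_def using S_mult by simp
  show "\<one>\<^bsub>SG\<^esub> \<in> carrier SG" unfolding SUstar_group_def using S_one by simp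
  show "\<And>x y z. x \<in> carrier SG \<Longrightarrow> y \<in> carrier SG \<Longrightarrow> z \<in> carrier SG \<Longrightarrow>
     x \<otimes>\<^bsub>SG\<^esub> y \<otimes>\<^bsub>SG\<^esub> z = x \<otimes>\<^bsub>SG\<^esub> (y \<otimes>\<^bsub>SG\<^esub> z)"
    unfolding SUstar_group_def using S_car by (simp add: assoc_mult_mat[of _ d d _ d _ d])
  fix x assume "x \<in> carrier SG"
  hence "x \<in> carrier_mat d d" using S_car by (simp add: SUstar_group_def)
  thus "\<one>\<^bsub>SG\<^esub> \<otimes>\<^bsub>SG\<^esub> x = x"
    unfolding SUstar_group_def by (simp add: left_mult_one_mat)
next
  show "\<And>x. x \<in> carrier SG \<Longrightarrow> \<exists>y\<in>carrier SG. y \<otimes>\<^bsub>SG\<^esub> x = \<one>\<^bsub>SG\<^esub>"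
    unfolding SUstar_group_def using S_inv by auto
qed

lemma SG_simps: "carrier SG = S" "x \<otimes>\<^bsub>SG\<^esub> y = x * y" "\<one>\<^bsub>SG\<^esub> = 1\<^sub>m d"
  unfolding SUstar_group_def by auto

lemma N_eq: assumes "\<And>x. x \<in> carrier_vec d \<Longrightarrow> Q x y = Q x z" shows "N y = N z"
  by (rule mat_eqI_vec[of _ d]) (auto simp: N_vec assms)

lemma N_mult: assumes y: "y \<in> carrier_vec d" and z: "z \<in> carrier_vec d"
  shows "N y * N z = N (y + z)"
proof (rule mat_eqI_vec[of _ d])
  fix x :: "complex vec" assume x: "x \<in> carrier_vec d"
  have "(N y * N z) *\<^sub>v x = N y *\<^sub>v (N z *\<^sub>v x)" using x by (simp add: assoc_mult_mat_vec[of _ d d _ d])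
  also have "\<dots> = x + Q x (y + z) \<cdot>\<^sub>v e" using x y z e_car
    by (simp add: N_vec Q_add_left Q_add_right Q_smult_left e_radical)
       (intro eq_vecI, auto simp: algebra_simps)
  finally show "(N y * N z) *\<^sub>v x = N (y + z) *\<^sub>v x" using x by (simp add: N_vec)
qed (use y z mult_carrier_mat[OF N_car N_car] in auto)

lemma N_one: assumes "\<And>x. x \<in> carrier_vec d \<Longrightarrow> Q x y = 0" shows "N y = 1\<^sub>m d"
  by (rule mat_eqI_vec[of _ d]) (auto simp: N_vec assms e_car)

lemma N_conj: assumes k: "k \<in> S" and y: "y \<in> carrier_vec d"
  shows "k * N y = N (k *\<^sub>v y) * k"
proof (rule mat_eqI_vec[of _ d])
  have kc: "k \<in> carrier_mat d d" using S_car k by auto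
  fix x :: "complex vec" assume x: "x \<in> carrier_vec d"
  have "(k * N y) *\<^sub>v x = k *\<^sub>v (x + Q x y \<cdot>\<^sub>v e)" using x kc by (simp add: assoc_mult_mat_vec[of _ d d _ d] N_vec)
  also have "\<dots> = k *\<^sub>v x + Q x y \<cdot>\<^sub>v e" using x kc e_car S_e[OF k]
    by (simp add: mult_add_distrib_mat_vec[of _ d d] mult_mat_vec[of _ d d])
  also have "\<dots> = (N (k *\<^sub>v y) * k) *\<^sub>v x" using x kc y S_Q[OF k x y]
    by (simp add: assoc_mult_mat_vec[of _ d d _ d] N_vec)
  finally show "(k * N y) *\<^sub>v x = (N (k *\<^sub>v y) * k) *\<^sub>v x" .
qed (use k S_car in \<open>auto intro!: mult_carrier_mat[of _ d d _ d]\<close>)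

end


context setting begin

lemma Q_cnj: assumes x: "x \<in> carrier_vec d"
  shows "Q x (vec d (\<lambda>j. cnj (w $ j))) = (\<Sum>i<d. x $ i * (\<Sum>j<d. gramQ \<alpha> i j * w $ j))"
  unfolding Qform_def sum_distrib_left
  by (intro sum.cong refl) (simp add: mult.commute mult.left_commute)

definition Bp :: "complex mat" where
  "Bp = mat d d (\<lambda>(i,j). if i = 0 \<or> j = 0 then (if i = j then 1 else 0) else gramQ \<alpha> i j)"

lemma Bp_car: "Bp \<in> carrier_mat d d" unfolding Bp_def by auto

lemma Bp_row0: assumes w: "w \<in> carrier_vec d" shows "(Bp *\<^sub>v w) $ 0 = w $ 0"
proof -
  have "(Bp *\<^sub>v w) $ 0 = (\<Sum>j\<in>{0..<d}. (if j = 0 then 1 else 0) * w $ j)"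
    using w d0 unfolding Bp_def by (simp add: scalar_prod_def row_def)
  also have "\<dots> = (\<Sum>j\<in>{0..<d}. if j = 0 then w $ j else 0)" by (intro sum.cong) auto
  also have "\<dots> = w $ 0" using d0 by simp
  finally show ?thesis .
qed

lemma Bp_row: assumes w: "w \<in> carrier_vec d" and w0: "w $ 0 = 0" and i: "0 < i" "i < d"
  shows "(Bp *\<^sub>v w) $ i = (\<Sum>j<d. gramQ \<alpha> i j * w $ j)"
proof -
  have "(Bp *\<^sub>v w) $ i = (\<Sum>j\<in>{0..<d}. (if j = 0 then 0 else gramQ \<alpha> i j) * w $ j)"
    using w i unfolding Bp_def by (simp add: scalar_prod_def row_def) (intro sum.cong, auto)
  also have "\<dots> = (\<Sum>j<d. gramQ \<alpha> i j * w $ j)"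
    unfolding atLeast0LessThan by (intro sum.cong refl) (simp add: w0)
  finally show ?thesis .
qed

lemma Bp_inj: assumes w: "w \<in> carrier_vec d" and bw: "Bp *\<^sub>v w = 0\<^sub>v d" shows "w = 0\<^sub>v d"
proof -
  have w0: "w $ 0 = 0" using Bp_row0[OF w] bw d0 by simp
  define z where "z = vec d (\<lambda>j. cnj (w $ j))"
  have zH: "z \<in> H" unfolding z_def hypH_def using w0 d0 by auto
  have "Q x z = 0" if x: "x \<in> H" for x
  proof -
    have xc: "x \<in> carrier_vec d" using x H_car by auto
    have "Q x z = (\<Sum>i<d. x $ i * (\<Sum>j<d. gramQ \<alpha> i j * w $ j))" unfolding z_def by (rule Q_cnj[OF xc])
    also have "\<dots> = 0"
    proof (intro sum.neutral ballI)
      fix i assume i: "i \<in> {..<d}"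
      show "x $ i * (\<Sum>j<d. gramQ \<alpha> i j * w $ j) = 0"
      proof (cases "i = 0")
        case True thus ?thesis using H_0[OF x] by simp
      next
        case False
        hence "(\<Sum>j<d. gramQ \<alpha> i j * w $ j) = (Bp *\<^sub>v w) $ i" using Bp_row[OF w w0, of i] i by auto
        also have "\<dots> = 0" using bw i by simp
        finally show ?thesis by simp
      qed
    qed
    finally show ?thesis .
  qed
  hence "z = 0\<^sub>v d" using nondeg'[OF zH] by auto
  thus ?thesis using w unfolding z_def by (intro eq_vecI) (auto simp: vec_eq_iff)
qed

lemma duality: assumes phi: "\<phi> \<in> carrier_vec d"
  shows "\<exists>z\<in>H. \<forall>x\<in>H. Q x z = (\<Sum>i<d. x $ i * \<phi> $ i)"
proof -
  have "det Bp \<noteq> 0"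
    using det_0_iff_vec_prod_zero[OF Bp_car] Bp_inj by auto
  hence "Bp \<in> Units (ring_mat TYPE(complex) d undefined)"
    using det_non_zero_imp_unit[OF Bp_car] by simp
  then obtain Bi where Bi: "Bi \<in> carrier_mat d d" "Bp * Bi = 1\<^sub>m d"
    unfolding Units_def ring_mat_def by auto
  define \<psi> where "\<psi> = vec d (\<lambda>i. if i = 0 then 0 else \<phi> $ i)"
  define w where "w = Bi *\<^sub>v \<psi>"
  have wc: "w \<in> carrier_vec d" unfolding w_def \<psi>_def using Bi by auto
  have bw: "Bp *\<^sub>v w = \<psi>" unfolding w_def using Bi Bp_car
    by (simp add: assoc_mult_mat_vec[symmetric, of _ d d _ d] \<psi>_def)
  have w0: "w $ 0 = 0" using Bp_row0[OF wc] bw d0 unfolding \<psi>_def by simp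
  define z where "z = vec d (\<lambda>j. cnj (w $ j))"
  have zH: "z \<in> H" unfolding z_def hypH_def using w0 d0 by auto
  have "Q x z = (\<Sum>i<d. x $ i * \<phi> $ i)" if x: "x \<in> H" for x
  proof -
    have xc: "x \<in> carrier_vec d" using x H_car by auto
    have "Q x z = (\<Sum>i<d. x $ i * (\<Sum>j<d. gramQ \<alpha> i j * w $ j))" unfolding z_def by (rule Q_cnj[OF xc])
    also have "\<dots> = (\<Sum>i<d. x $ i * \<phi> $ i)"
    proof (intro sum.cong refl)
      fix i assume i: "i \<in> {..<d}"
      show "x $ i * (\<Sum>j<d. gramQ \<alpha> i j * w $ j) = x $ i * \<phi> $ i"
      proof (cases "i = 0")
        case True thus ?thesis using H_0[OF x] by simp
      next
        case False
        hence "(\<Sum>j<d. gramQ \<alpha> i j * w $ j) = (Bp *\<^sub>v w) $ i" using Bp_row[OF wc w0, of i] i by auto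
        also have "\<dots> = \<phi> $ i" using bw i False unfolding \<psi>_def by simp
        finally show ?thesis by simp
      qed
    qed
    finally show ?thesis .
  qed
  thus ?thesis using zH by blast
qed

lemma decomp: assumes g: "g \<in> S" shows "\<exists>y\<in>carrier_vec d. N y * g \<in> D"
proof -
  have gc: "g \<in> carrier_mat d d" using S_car g by auto
  define \<phi> where "\<phi> = vec d (\<lambda>i. - g $$ (0, i) / e $ 0)"
  obtain z where zH: "z \<in> H" and z: "\<forall>x\<in>H. Q x z = (\<Sum>i<d. x $ i * \<phi> $ i)"
    using duality[of \<phi>] unfolding \<phi>_def by auto
  have zc: "z \<in> carrier_vec d" using zH H_car by auto
  define y where "y = g *\<^sub>v z"
  have yc: "y \<in> carrier_vec d" unfolding y_def using gc zc by auto
  have "N y * g \<in> S" using S_mult[OF N_S[OF yc] g] .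
  moreover have "(N y * g) *\<^sub>v x \<in> H" if x: "x \<in> H" for x
  proof -
    have xc: "x \<in> carrier_vec d" using x H_car by auto
    have eq: "(N y * g) *\<^sub>v x = g *\<^sub>v x + Q x z \<cdot>\<^sub>v e"
      using xc gc zc S_Q[OF g xc zc] by (simp add: assoc_mult_mat_vec[of _ d d _ d] N_vec y_def)
    have "(g *\<^sub>v x) $ 0 = (\<Sum>i<d. g $$ (0, i) * x $ i)"
      using gc xc d0 by (simp add: scalar_prod_def row_def atLeast0LessThan)
    moreover have "Q x z * e $ 0 = - (\<Sum>i<d. g $$ (0, i) * x $ i)"
    proof -
      have "Q x z * e $ 0 = (\<Sum>i<d. x $ i * \<phi> $ i * e $ 0)" using z x by (simp add: sum_distrib_right)
      also have "\<dots> = (\<Sum>i<d. - (g $$ (0, i) * x $ i))"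
        by (intro sum.cong refl) (simp add: \<phi>_def e0)
      also have "\<dots> = - (\<Sum>i<d. g $$ (0, i) * x $ i)" by (simp add: sum_negf)
      finally show ?thesis .
    qed
    ultimately have "((N y * g) *\<^sub>v x) $ 0 = 0" unfolding eq using gc xc e_car d0 by simp
    moreover have "(N y * g) *\<^sub>v x \<in> carrier_vec d" using gc xc by (simp add: eq e_car)
    ultimately show ?thesis unfolding hypH_def by auto
  qed
  ultimately show ?thesis unfolding Dgrp_def using yc by auto
qed

end


lemma unit_cnj: "cmod \<omega> = 1 \<Longrightarrow> \<omega> * cnj \<omega> = 1"
  using complex_norm_square[of \<omega>] by simp

context setting begin

definition R :: "complex vec \<Rightarrow> complex \<Rightarrow> complex mat" where
  "R u \<omega> = T (((\<omega> - 1) / Q u u) \<cdot>\<^sub>v u) u"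

lemma R_car[simp]: "R u \<omega> \<in> carrier_mat d d" unfolding R_def by simp

lemma R_vec: assumes u: "u \<in> carrier_vec d" and x: "x \<in> carrier_vec d"
  shows "R u \<omega> *\<^sub>v x = x + ((\<omega> - 1) / Q u u * Q x u) \<cdot>\<^sub>v u"
  unfolding R_def using u x by (simp add: T_vec smult_smult_assoc mult.commute)

lemma R_det: assumes u: "u \<in> carrier_vec d" and q: "Q u u \<noteq> 0"
  shows "det (R u \<omega>) = \<omega>"
  unfolding R_def using u q by (simp add: T_det Q_smult_left)

lemma R_Q: assumes u: "u \<in> carrier_vec d" and q: "Q u u \<noteq> 0" and w: "cmod \<omega> = 1"
  and x: "x \<in> carrier_vec d" and y: "y \<in> carrier_vec d"
  shows "Q (R u \<omega> *\<^sub>v x) (R u \<omega> *\<^sub>v y) = Q x y"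
proof -
  define c where "c = (\<omega> - 1) / Q u u"
  define a where "a = c * Q x u"
  define b where "b = c * Q y u"
  have E1: "Q (R u \<omega> *\<^sub>v x) (R u \<omega> *\<^sub>v y) = Q (x + a \<cdot>\<^sub>v u) (y + b \<cdot>\<^sub>v u)"
    using R_vec[OF u x] R_vec[OF u y] unfolding a_def b_def c_def by simp
  have E2: "Q (x + a \<cdot>\<^sub>v u) (y + b \<cdot>\<^sub>v u) = Q x y + (cnj b * Q x u + a * Q u y + a * cnj b * Q u u)"
    using u x y by (simp add: Q_add_left Q_add_right Q_smult_left Q_smult_right algebra_simps)
  have E3: "cnj b * Q x u + a * Q u y + a * cnj b * Q u u = Q x u * Q u y * (cnj c + c + c * cnj c * Q u u)"
  proof -
    have "cnj (Q y u) = Q u y" using Q_herm[of d \<alpha> u y] by simp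
    thus ?thesis unfolding a_def b_def by (simp add: algebra_simps)
  qed
  have E4: "cnj c + c + c * cnj c * Q u u = 0"
  proof -
    have qr: "cnj (Q u u) = Q u u" by (rule Q_real)
    have "cnj c = (cnj \<omega> - 1) / Q u u" unfolding c_def using qr by simp
    hence "(cnj c + c + c * cnj c * Q u u) * Q u u = (cnj \<omega> - 1) + (\<omega> - 1) + (\<omega> - 1) * (cnj \<omega> - 1)"
      unfolding c_def using q qr by (simp add: field_simps)
    also have "\<dots> = \<omega> * cnj \<omega> - 1" by (simp add: algebra_simps)
    also have "\<dots> = 0" using unit_cnj[OF w] by simp
    finally show ?thesis using q by simp
  qed
  show ?thesis using E1 E2 E3 E4 by simp
qed

lemma R_e: assumes u: "u \<in> carrier_vec d" shows "R u \<omega> *\<^sub>v e = e"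
  using R_vec[OF u e_car] e_radical[OF u] u e_car by simp

lemma R_H: assumes u: "u \<in> H" and x: "x \<in> H" shows "R u \<omega> *\<^sub>v x \<in> H"
proof -
  have uc: "u \<in> carrier_vec d" and xc: "x \<in> carrier_vec d" using u x H_car by auto
  show ?thesis using R_vec[OF uc xc] H_0[OF u] H_0[OF x] uc xc d0 unfolding hypH_def by simp
qed

lemma RR_D: assumes u: "u \<in> H" and qu: "Q u u \<noteq> 0" and v: "v \<in> H" and qv: "Q v v \<noteq> 0"
  and w: "cmod \<omega> = 1"
  shows "R u \<omega> * R v (cnj \<omega>) \<in> D"
proof -
  have uc: "u \<in> carrier_vec d" and vc: "v \<in> carrier_vec d" using u v H_car by auto
  have w': "cmod (cnj \<omega>) = 1" using w by simp
  let ?k = "R u \<omega> * R v (cnj \<omega>)"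
  have kc: "?k \<in> carrier_mat d d" by (rule mult_carrier_mat[OF R_car R_car])
  have kv: "?k *\<^sub>v x = R u \<omega> *\<^sub>v (R v (cnj \<omega>) *\<^sub>v x)" if "x \<in> carrier_vec d" for x
    using that by (simp add: assoc_mult_mat_vec[of _ d d _ d])
  have "det ?k = 1" using det_mult[OF R_car R_car] R_det[OF uc qu] R_det[OF vc qv] unit_cnj[OF w] by simp
  moreover have "Q (?k *\<^sub>v x) (?k *\<^sub>v y) = Q x y" if "x \<in> carrier_vec d" "y \<in> carrier_vec d" for x y
  proof -
    have "R v (cnj \<omega>) *\<^sub>v x \<in> carrier_vec d" "R v (cnj \<omega>) *\<^sub>v y \<in> carrier_vec d"
      using that mult_mat_vec_carrier[OF R_car] by auto
    thus ?thesis using that kv R_Q[OF uc qu w] R_Q[OF vc qv w'] by simp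
  qed
  moreover have "?k *\<^sub>v e = e" using kv[OF e_car] R_e[OF uc] R_e[OF vc] by simp
  moreover have "?k *\<^sub>v x \<in> H" if "x \<in> H" for x
    using that kv[of x] H_car R_H[OF u] R_H[OF v] by simp
  ultimately show ?thesis unfolding Dgrp_def SUstar_def using kc by auto
qed

lemma RR_vec: assumes u: "u \<in> carrier_vec d" and v: "v \<in> carrier_vec d" and uv: "Q v u = 0"
  and x: "x \<in> carrier_vec d"
  shows "(R u \<omega> * R v \<omega>') *\<^sub>v x = x + ((\<omega> - 1) / Q u u * Q x u) \<cdot>\<^sub>v u + ((\<omega>' - 1) / Q v v * Q x v) \<cdot>\<^sub>v v"
proof -
  have "(R u \<omega> * R v \<omega>') *\<^sub>v x = R u \<omega> *\<^sub>v (x + ((\<omega>' - 1) / Q v v * Q x v) \<cdot>\<^sub>v v)"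
    using x v by (simp add: assoc_mult_mat_vec[of _ d d _ d] R_vec)
  also have "\<dots> = (x + ((\<omega>' - 1) / Q v v * Q x v) \<cdot>\<^sub>v v) + ((\<omega> - 1) / Q u u * Q x u) \<cdot>\<^sub>v u"
    using u v x uv by (simp add: R_vec Q_add_left Q_smult_left)
  also have "\<dots> = x + ((\<omega> - 1) / Q u u * Q x u) \<cdot>\<^sub>v u + ((\<omega>' - 1) / Q v v * Q x v) \<cdot>\<^sub>v v"
    using u v x by (intro eq_vecI) auto
  finally show ?thesis .
qed

end


lemma three_dep: fixes s1 s2 s3 t1 t2 t3 :: complex
  shows "\<exists>v0 v1 v2. (v0 \<noteq> 0 \<or> v1 \<noteq> 0 \<or> v2 \<noteq> 0) \<and> s1 * v0 + s2 * v1 + s3 * v2 = 0 \<and> t1 * v0 + t2 * v1 + t3 * v2 = 0"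
proof -
  define c where "c i = (if i = 0 then vec 3 (\<lambda>j. [s1,s2,s3] ! j) else if i = 1 then vec 3 (\<lambda>j. [t1,t2,t3] ! j) else 0\<^sub>v 3)" for i :: nat
  define M where "M = mat\<^sub>r 3 3 (\<lambda>i. if i = 2 then 0\<^sub>v 3 else c i)"
  have "det M = 0" unfolding M_def by (rule det_row_0) (auto simp: c_def)
  moreover have Mc: "M \<in> carrier_mat 3 3" unfolding M_def by auto
  ultimately obtain v where v: "v \<in> carrier_vec 3" "v \<noteq> 0\<^sub>v 3" "M *\<^sub>v v = 0\<^sub>v 3"
    using det_0_iff_vec_prod_zero[OF Mc] by auto
  have r0: "(M *\<^sub>v v) $ 0 = s1 * v $ 0 + s2 * v $ 1 + s3 * v $ 2"
    using v(1) unfolding M_def c_def by (simp add: scalar_prod_def numeral_3_eq_3 eval_nat_numeral)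
  have r1: "(M *\<^sub>v v) $ 1 = t1 * v $ 0 + t2 * v $ 1 + t3 * v $ 2"
    using v(1) unfolding M_def c_def by (simp add: scalar_prod_def numeral_3_eq_3 eval_nat_numeral)
  have "v $ 0 \<noteq> 0 \<or> v $ 1 \<noteq> 0 \<or> v $ 2 \<noteq> 0"
  proof (rule ccontr)
    assume "\<not> ?thesis"
    hence "v = 0\<^sub>v 3" using v(1) by (intro eq_vecI) (auto simp: less_Suc_eq numeral_2_eq_2 numeral_3_eq_3)
    thus False using v(2) by simp
  qed
  thus ?thesis using r0 r1 v(3) by auto
qed

lemma real_choice: fixes A B C :: real and \<beta> \<gamma> :: complex
  assumes C: "C \<noteq> 0" and bg: "\<beta> \<noteq> 0 \<or> \<gamma> \<noteq> 0"
  shows "\<exists>s::real. A + s * B + s^2 * C \<noteq> 0 \<and> \<beta> + of_real s * \<gamma> \<noteq> 0"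
proof -
  define s where "s = 1 + (\<bar>A\<bar> + \<bar>B\<bar> + cmod \<beta>) / \<bar>C\<bar> + cmod \<beta> / cmod \<gamma>"
  have Cp: "\<bar>C\<bar> > 0" using C by simp
  have q1: "(\<bar>A\<bar> + \<bar>B\<bar> + cmod \<beta>) / \<bar>C\<bar> \<ge> 0" by simp
  have q2: "cmod \<beta> / cmod \<gamma> \<ge> 0" by simp
  have s1: "s \<ge> 1" unfolding s_def using q1 q2 by linarith
  have e2: "s * \<bar>C\<bar> \<ge> (1 + (\<bar>A\<bar> + \<bar>B\<bar> + cmod \<beta>) / \<bar>C\<bar>) * \<bar>C\<bar>"
    unfolding s_def using q2 Cp by (intro mult_right_mono) auto
  have e1: "(1 + (\<bar>A\<bar> + \<bar>B\<bar> + cmod \<beta>) / \<bar>C\<bar>) * \<bar>C\<bar> = \<bar>C\<bar> + \<bar>A\<bar> + \<bar>B\<bar> + cmod \<beta>"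
    using Cp by (simp add: field_simps)
  have sC: "s * \<bar>C\<bar> > \<bar>A\<bar> + \<bar>B\<bar>" using Cp e1 e2 norm_ge_zero[of \<beta>] by linarith
  have "\<bar>s^2 * C\<bar> = s * (s * \<bar>C\<bar>)" using s1 by (simp add: abs_mult power2_eq_square)
  also have "\<dots> > s * (\<bar>A\<bar> + \<bar>B\<bar>)" using sC s1 by simp
  finally have "\<bar>s^2 * C\<bar> > s * (\<bar>A\<bar> + \<bar>B\<bar>)" .
  moreover have "s * (\<bar>A\<bar> + \<bar>B\<bar>) \<ge> \<bar>A\<bar> + s * \<bar>B\<bar>"
  proof -
    have "s * \<bar>A\<bar> \<ge> 1 * \<bar>A\<bar>" using s1 by (intro mult_right_mono) auto
    thus ?thesis by (simp add: distrib_left)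
  qed
  moreover have "\<bar>A + s * B\<bar> \<le> \<bar>A\<bar> + s * \<bar>B\<bar>" using s1 abs_triangle_ineq[of A "s * B"] by (simp add: abs_mult)
  ultimately have 1: "A + s * B + s^2 * C \<noteq> 0" by linarith
  have 2: "\<beta> + of_real s * \<gamma> \<noteq> 0"
  proof (cases "\<gamma> = 0")
    case True thus ?thesis using bg by simp
  next
    case False
    hence gp: "cmod \<gamma> > 0" by simp
    have f2: "s * cmod \<gamma> \<ge> (1 + cmod \<beta> / cmod \<gamma>) * cmod \<gamma>"
      unfolding s_def using q1 gp by (intro mult_right_mono) auto
    have f1: "(1 + cmod \<beta> / cmod \<gamma>) * cmod \<gamma> = cmod \<gamma> + cmod \<beta>" using gp by (simp add: field_simps)
    have "cmod (of_real s * \<gamma>) = s * cmod \<gamma>" using s1 by (simp add: norm_mult)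
    hence "cmod (of_real s * \<gamma>) > cmod \<beta>" using f1 f2 gp by linarith
    thus ?thesis by (metis add_eq_0_iff norm_minus_cancel order_less_irrefl)
  qed
  show ?thesis using 1 2 by blast
qed

context setting begin

lemma not_span2: assumes a: "a \<in> carrier_vec d" and b: "b \<in> carrier_vec d"
  shows "\<not> (\<forall>h\<in>H. \<exists>s t. h = s \<cdot>\<^sub>v a + t \<cdot>\<^sub>v b)"
proof
  assume all: "\<forall>h\<in>H. \<exists>s t. h = s \<cdot>\<^sub>v a + t \<cdot>\<^sub>v b"
  have uH: "unit_vec d k \<in> H" if "0 < k" "k < d" for k
    unfolding hypH_def using that by auto
  obtain s1 t1 where 1: "unit_vec d 1 = s1 \<cdot>\<^sub>v a + t1 \<cdot>\<^sub>v b" using all uH[of 1] d4 by force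
  obtain s2 t2 where 2: "unit_vec d 2 = s2 \<cdot>\<^sub>v a + t2 \<cdot>\<^sub>v b" using all uH[of 2] d4 by force
  obtain s3 t3 where 3: "unit_vec d 3 = s3 \<cdot>\<^sub>v a + t3 \<cdot>\<^sub>v b" using all uH[of 3] d4 by force
  obtain v0 v1 v2 where v: "v0 \<noteq> 0 \<or> v1 \<noteq> 0 \<or> v2 \<noteq> 0" "s1 * v0 + s2 * v1 + s3 * v2 = 0" "t1 * v0 + t2 * v1 + t3 * v2 = 0"
    using three_dep by blast
  have key: "v0 * unit_vec d 1 $ i + v1 * unit_vec d 2 $ i + v2 * unit_vec d 3 $ i = 0" if i: "i < d" for i
  proof -
    have "v0 * unit_vec d 1 $ i + v1 * unit_vec d 2 $ i + v2 * unit_vec d 3 $ i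
      = (s1 * v0 + s2 * v1 + s3 * v2) * a $ i + (t1 * v0 + t2 * v1 + t3 * v2) * b $ i"
      unfolding 1 2 3 using i a b by (simp add: algebra_simps)
    thus ?thesis using v by simp
  qed
  have "v0 = 0" using key[of 1] d4 by simp
  moreover have "v1 = 0" using key[of 2] d4 by simp
  moreover have "v2 = 0" using key[of 3] d4 by simp
  ultimately show False using v(1) by simp
qed

lemma polarize: assumes p: "p \<in> carrier_vec d" and q: "q \<in> carrier_vec d"
  and h: "Q p p = 0" "Q q q = 0" "Q (p + q) (p + q) = 0" "Q (p + \<i> \<cdot>\<^sub>v q) (p + \<i> \<cdot>\<^sub>v q) = 0"
  shows "Q p q = 0"
proof -
  have qp: "Q q p = cnj (Q p q)" by (rule Q_herm)
  have iq: "\<i> \<cdot>\<^sub>v q \<in> carrier_vec d" using q by simp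
  have "Q (p + q) (p + q) = Q p q + cnj (Q p q)" using p q h(1,2) qp by (simp add: Q_add_left Q_add_right)
  hence a: "Q p q + cnj (Q p q) = 0" using h(3) by simp
  have "Q (p + \<i> \<cdot>\<^sub>v q) (p + \<i> \<cdot>\<^sub>v q) = - \<i> * Q p q + \<i> * cnj (Q p q)"
    using p q iq h(1,2) qp by (simp add: Q_add_left Q_add_right Q_smult_left Q_smult_right)
  hence "- \<i> * Q p q + \<i> * cnj (Q p q) = 0" using h(4) by simp
  hence "\<i> * (- \<i> * Q p q + \<i> * cnj (Q p q)) = 0" by simp
  hence b: "Q p q - cnj (Q p q) = 0" by (simp add: algebra_simps)
  have "2 * Q p q = (Q p q + cnj (Q p q)) + (Q p q - cnj (Q p q))" by simp
  thus ?thesis using a b by simp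
qed

end


lemma real_of_cnj: "cnj z = z \<Longrightarrow> z = complex_of_real (Re z)"
  by (metis Reals_cnj_iff complex_is_Real_iff of_real_Re)

context setting begin

lemma H_add: "x \<in> H \<Longrightarrow> y \<in> H \<Longrightarrow> x + y \<in> H" unfolding hypH_def using d0 by auto
lemma H_smult: "x \<in> H \<Longrightarrow> c \<cdot>\<^sub>v x \<in> H" unfolding hypH_def using d0 by auto
lemma H_minus: "x \<in> H \<Longrightarrow> y \<in> H \<Longrightarrow> x - y \<in> H" unfolding hypH_def using d0 by auto

lemma coef: assumes "w = 0\<^sub>v d \<or> Q w w \<noteq> 0" shows "Q h w / Q w w * Q w w = Q h w"
  using assms by (auto simp: Q_zero_right)

lemma exists_perp: assumes w1: "w1 \<in> H" and w2: "w2 \<in> H" and w12: "Q w1 w2 = 0"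
  and ok1: "w1 = 0\<^sub>v d \<or> Q w1 w1 \<noteq> 0" and ok2: "w2 = 0\<^sub>v d \<or> Q w2 w2 \<noteq> 0"
  shows "\<exists>w\<in>H. Q w w \<noteq> 0 \<and> Q w w1 = 0 \<and> Q w w2 = 0"
proof (rule ccontr)
  assume "\<not> ?thesis"
  hence all: "\<And>w. w \<in> H \<Longrightarrow> Q w w1 = 0 \<Longrightarrow> Q w w2 = 0 \<Longrightarrow> Q w w = 0" by blast
  have w1c: "w1 \<in> carrier_vec d" and w2c: "w2 \<in> carrier_vec d" using w1 w2 H_car by auto
  have w21: "Q w2 w1 = 0" using w12 Q_herm[of d \<alpha> w2 w1] by simp
  define c1 where "c1 h = Q h w1 / Q w1 w1" for h
  define c2 where "c2 h = Q h w2 / Q w2 w2" for h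
  define p where "p h = h - c1 h \<cdot>\<^sub>v w1 - c2 h \<cdot>\<^sub>v w2" for h
  have pH: "p h \<in> H" if "h \<in> H" for h unfolding p_def using that w1 w2 by (intro H_minus H_smult)
  have pc: "p h \<in> carrier_vec d" if "h \<in> H" for h using pH[OF that] H_car by auto
  have pw1: "Q (p h) w1 = 0" if h: "h \<in> H" for h
  proof -
    have hc: "h \<in> carrier_vec d" using h H_car by auto
    have "Q (p h) w1 = Q h w1 - c1 h * Q w1 w1 - c2 h * Q w2 w1"
      unfolding p_def using hc w1c w2c by (simp add: Q_minus_left Q_smult_left)
    thus ?thesis using coef[OF ok1, of h] w21 unfolding c1_def by simp
  qed
  have pw2: "Q (p h) w2 = 0" if h: "h \<in> H" for h
  proof -
    have hc: "h \<in> carrier_vec d" using h H_car by auto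
    have "Q (p h) w2 = Q h w2 - c1 h * Q w1 w2 - c2 h * Q w2 w2"
      unfolding p_def using hc w1c w2c by (simp add: Q_minus_left Q_smult_left)
    thus ?thesis using coef[OF ok2, of h] w12 unfolding c2_def by simp
  qed
  have perp_add: "Q (x + y) w = 0" if "x \<in> H" "y \<in> H" "Q x w = 0" "Q y w = 0" for x y w
    using that H_car by (simp add: Q_add_left)
  have perp_sm: "Q (c \<cdot>\<^sub>v x) w = 0" if "x \<in> H" "Q x w = 0" for x w c
    using that H_car by (simp add: Q_smult_left)
  have pp: "Q (p h) (p h') = 0" if h: "h \<in> H" and h': "h' \<in> H" for h h'
  proof (rule polarize[OF pc[OF h] pc[OF h']])
    show "Q (p h) (p h) = 0" using all pH pw1 pw2 h by blast
    show "Q (p h') (p h') = 0" using all pH pw1 pw2 h' by blast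
    show "Q (p h + p h') (p h + p h') = 0"
    proof -
      have s1: "p h + p h' \<in> H" using H_add pH h h' by blast
      show ?thesis using all[OF s1 perp_add[OF pH[OF h] pH[OF h'] pw1[OF h] pw1[OF h']]
        perp_add[OF pH[OF h] pH[OF h'] pw2[OF h] pw2[OF h']]] .
    qed
    have ih: "\<i> \<cdot>\<^sub>v p h' \<in> H" using H_smult pH h' by blast
    show "Q (p h + \<i> \<cdot>\<^sub>v p h') (p h + \<i> \<cdot>\<^sub>v p h') = 0"
    proof -
      have s1: "p h + \<i> \<cdot>\<^sub>v p h' \<in> H" using H_add pH h ih by blast
      show ?thesis using all[OF s1 perp_add[OF pH[OF h] ih pw1[OF h] perp_sm[OF pH[OF h'] pw1[OF h']]]
        perp_add[OF pH[OF h] ih pw2[OF h] perp_sm[OF pH[OF h'] pw2[OF h']]]] .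
    qed
  qed
  have pz: "p h = 0\<^sub>v d" if h: "h \<in> H" for h
  proof (rule nondeg[OF pH[OF h]], intro ballI)
    fix h' assume h': "h' \<in> H"
    have h'c: "h' \<in> carrier_vec d" using h' H_car by auto
    have "Q (p h) (p h') = Q (p h) h' - cnj (c1 h') * Q (p h) w1 - cnj (c2 h') * Q (p h) w2"
      unfolding p_def[of h'] using h'c w1c w2c by (simp add: Q_minus_right Q_smult_right)
    thus "Q (p h) h' = 0" using pp[OF h h'] pw1[OF h] pw2[OF h] by simp
  qed
  have "\<forall>h\<in>H. \<exists>s t. h = s \<cdot>\<^sub>v w1 + t \<cdot>\<^sub>v w2"
  proof
    fix h assume h: "h \<in> H"
    have hc: "h \<in> carrier_vec d" using h H_car by auto
    have "h = c1 h \<cdot>\<^sub>v w1 + c2 h \<cdot>\<^sub>v w2"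
    proof (rule eq_vecI)
      fix i assume "i < dim_vec (c1 h \<cdot>\<^sub>v w1 + c2 h \<cdot>\<^sub>v w2)"
      hence i: "i < d" using w1c w2c by simp
      have "p h $ i = 0" using pz[OF h] i by simp
      thus "h $ i = (c1 h \<cdot>\<^sub>v w1 + c2 h \<cdot>\<^sub>v w2) $ i" unfolding p_def using i hc w1c w2c
        by simp (metis add.commute diff_eq_eq)
    qed (use hc w1c w2c in simp)
    thus "\<exists>s t. h = s \<cdot>\<^sub>v w1 + t \<cdot>\<^sub>v w2" by blast
  qed
  thus False using not_span2[OF w1c w2c] by blast
qed

end




context setting begin
lemma L_vec: assumes u: "u \<in> carrier_vec d" and qu: "Q u u \<noteq> 0" and v: "v \<in> carrier_vec d"
  and bg: "\<beta> \<noteq> 0 \<or> \<gamma> \<noteq> 0"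
  shows "\<exists>s::real. Q (v + complex_of_real s \<cdot>\<^sub>v u) (v + complex_of_real s \<cdot>\<^sub>v u) \<noteq> 0
     \<and> \<beta> + complex_of_real s * \<gamma> \<noteq> 0"
proof -
  define A where "A = Re (Q v v)"
  define B where "B = Re (Q v u + Q u v)"
  define C where "C = Re (Q u u)"
  have hA: "Q v v = of_real A" unfolding A_def by (rule real_of_cnj[OF Q_real])
  have hC: "Q u u = of_real C" unfolding C_def by (rule real_of_cnj[OF Q_real])
  have hB: "Q v u + Q u v = of_real B" unfolding B_def
    by (rule real_of_cnj) (simp add: Q_herm[of d \<alpha> u v] add.commute)
  have C0: "C \<noteq> 0" using qu hC by simp
  obtain s where s: "A + s * B + s^2 * C \<noteq> 0" "\<beta> + of_real s * \<gamma> \<noteq> 0"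
    using real_choice[OF C0 bg] by blast
  have "Q (v + complex_of_real s \<cdot>\<^sub>v u) (v + complex_of_real s \<cdot>\<^sub>v u)
     = Q v v + of_real s * (Q v u + Q u v) + (of_real s)^2 * Q u u"
  proof -
    let ?s = "complex_of_real s"
    have "Q (v + ?s \<cdot>\<^sub>v u) (v + ?s \<cdot>\<^sub>v u) = Q v v + cnj ?s * Q v u + (?s * Q u v + ?s * (cnj ?s * Q u u))"
      using u v by (simp add: Q_add_left Q_add_right Q_smult_left Q_smult_right distrib_left)
    also have "\<dots> = Q v v + ?s * (Q v u + Q u v) + ?s^2 * Q u u"
      by (simp add: power2_eq_square distrib_left mult.assoc)
    finally show ?thesis .
  qed
  also have "\<dots> = of_real (A + s * B + s^2 * C)" unfolding hA hB hC by simp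
  finally have eq: "Q (v + complex_of_real s \<cdot>\<^sub>v u) (v + complex_of_real s \<cdot>\<^sub>v u) = of_real (A + s * B + s^2 * C)" .
  have ne: "complex_of_real (A + s * B + s^2 * C) \<noteq> 0" using s(1) of_real_eq_0_iff by blast
  show ?thesis using s(2) ne unfolding eq[symmetric] by blast
qed

end


locale gsetting = setting +
  fixes G :: "complex mat set"
  assumes sub: "subgroup G (SUstar_group d \<alpha> e)" and DG: "Dgrp d \<alpha> e \<subseteq> G"
begin

lemma GS: "G \<subseteq> S" using subgroup.subset[OF sub] SG_simps by simp
lemma G_mult: "x \<in> G \<Longrightarrow> y \<in> G \<Longrightarrow> x * y \<in> G" using subgroup.m_closed[OF sub] SG_simps by metis
lemma G_one: "1\<^sub>m d \<in> G" using subgroup.one_closed[OF sub] SG_simps by metis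
lemma G_inv: "x \<in> G \<Longrightarrow> inv\<^bsub>SG\<^esub> x \<in> G" using subgroup.m_inv_closed[OF sub] by metis
lemma inv_S: "x \<in> S \<Longrightarrow> inv\<^bsub>SG\<^esub> x \<in> S" using group.inv_closed[OF S_group] SG_simps by metis
lemma r_inv_S: "x \<in> S \<Longrightarrow> x * inv\<^bsub>SG\<^esub> x = 1\<^sub>m d" using group.r_inv[OF S_group] SG_simps by metis
lemma l_inv_S: "x \<in> S \<Longrightarrow> inv\<^bsub>SG\<^esub> x * x = 1\<^sub>m d" using group.l_inv[OF S_group] SG_simps by metis
lemma assoc_S: "x \<in> S \<Longrightarrow> y \<in> S \<Longrightarrow> z \<in> S \<Longrightarrow> x * y * z = x * (y * z)"
  using S_car by (simp add: assoc_mult_mat[of _ d d _ d _ d])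
lemma one_l: "x \<in> S \<Longrightarrow> 1\<^sub>m d * x = x" using S_car left_mult_one_mat by metis
lemma one_r: "x \<in> S \<Longrightarrow> x * 1\<^sub>m d = x" using S_car right_mult_one_mat by metis

definition "Y = {y \<in> carrier_vec d. N y \<in> G}"

lemma N0: "N (0\<^sub>v d) = 1\<^sub>m d" by (rule N_one) (simp add: Q_zero_right)

lemma Y0: "0\<^sub>v d \<in> Y" unfolding Y_def using N0 G_one by simp

lemma Y_add: assumes "y \<in> Y" "z \<in> Y" shows "y + z \<in> Y"
  using assms unfolding Y_def using N_mult[of y z, symmetric] G_mult[of "N y" "N z"] by auto

lemma N_neg: assumes y: "y \<in> carrier_vec d" shows "N (- y) * N y = 1\<^sub>m d"
proof -
  have "N (- y) * N y = N (- y + y)" using N_mult y by simp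
  also have "- y + y = 0\<^sub>v d" using y by simp
  finally show ?thesis using N0 by simp
qed

lemma Y_neg: assumes y: "y \<in> Y" shows "- y \<in> Y"
proof -
  have yc: "y \<in> carrier_vec d" and NG: "N y \<in> G" using y unfolding Y_def by auto
  have "inv\<^bsub>SG\<^esub> (N y) = N (- y)"
    using group.inv_equality[OF S_group, of "N (- y)" "N y"] N_neg[OF yc] N_S yc SG_simps by simp
  thus ?thesis using G_inv[OF NG] yc unfolding Y_def by simp
qed

lemma Y_car: "y \<in> Y \<Longrightarrow> y \<in> carrier_vec d" unfolding Y_def by auto

lemma Y_sub: assumes "y \<in> Y" "z \<in> Y" shows "y - z \<in> Y"
proof -
  have "y - z = y + - z" using Y_car assms by auto
  thus ?thesis using Y_add Y_neg assms by simp
qed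

lemma Y_D: assumes k: "k \<in> D" and y: "y \<in> Y" shows "k *\<^sub>v y \<in> Y"
proof -
  have kS: "k \<in> S" using k unfolding Dgrp_def by auto
  have kG: "k \<in> G" using k DG by auto
  have yc: "y \<in> carrier_vec d" and NG: "N y \<in> G" using y unfolding Y_def by auto
  have kyc: "k *\<^sub>v y \<in> carrier_vec d" using S_car[OF kS] yc by simp
  have "k * N y * inv\<^bsub>SG\<^esub> k = N (k *\<^sub>v y) * k * inv\<^bsub>SG\<^esub> k" using N_conj[OF kS yc] by simp
  also have "\<dots> = N (k *\<^sub>v y)" using assoc_S[OF N_S[OF kyc] kS inv_S[OF kS]] r_inv_S[OF kS] one_r N_S[OF kyc] by simp
  finally have "N (k *\<^sub>v y) = k * N y * inv\<^bsub>SG\<^esub> k" by simp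
  moreover have "k * N y * inv\<^bsub>SG\<^esub> k \<in> G" using G_mult[OF G_mult[OF kG NG] G_inv[OF kG]] .
  ultimately show ?thesis using kyc unfolding Y_def by simp
qed

lemma Y_diff: "k \<in> D \<Longrightarrow> y \<in> Y \<Longrightarrow> k *\<^sub>v y - y \<in> Y"
  using Y_D Y_sub by simp

lemma Y_nat: assumes y: "y \<in> Y" shows "of_nat n \<cdot>\<^sub>v y \<in> Y"
proof (induction n)
  case 0
  have "0 \<cdot>\<^sub>v y = 0\<^sub>v d" using Y_car[OF y] by (intro eq_vecI) auto
  thus ?case using Y0 by simp
next
  case (Suc n)
  have "of_nat (Suc n) \<cdot>\<^sub>v y = of_nat n \<cdot>\<^sub>v y + y" using Y_car[OF y] by (intro eq_vecI) (auto simp: algebra_simps)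
  thus ?case using Y_add Suc y by simp
qed

lemma Y_units: assumes v: "v \<in> carrier_vec d" and h: "\<And>\<omega>. cmod \<omega> = 1 \<Longrightarrow> (\<omega> - 1) \<cdot>\<^sub>v v \<in> Y"
  shows "s \<cdot>\<^sub>v v \<in> Y"
proof -
  have diff: "(a - b) \<cdot>\<^sub>v v \<in> Y" if "cmod a = 1" "cmod b = 1" for a b
  proof -
    have "(a - b) \<cdot>\<^sub>v v = (a - 1) \<cdot>\<^sub>v v - (b - 1) \<cdot>\<^sub>v v" using v by (intro eq_vecI) (auto simp: algebra_simps)
    thus ?thesis using Y_sub h that by simp
  qed
  have real_in: "of_real t \<cdot>\<^sub>v v \<in> Y \<and> (\<i> * of_real t) \<cdot>\<^sub>v v \<in> Y" if t: "\<bar>t\<bar> \<le> 2" for t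
  proof -
    define \<omega> where "\<omega> = Complex (t/2) (sqrt (1 - (t/2)^2))"
    have "\<bar>t/2\<bar> \<le> 1" using t by simp
    hence le: "(t/2)^2 \<le> 1" using abs_square_le_1 by blast
    have w1: "cmod \<omega> = 1" unfolding \<omega>_def cmod_def using le by simp
    have w2: "cmod (- cnj \<omega>) = 1" using w1 by simp
    have w3: "cmod (\<i> * \<omega>) = 1" using w1 by (simp add: norm_mult)
    have w4: "cmod (- \<i> * cnj \<omega>) = 1" using w1 by (simp add: norm_mult)
    have "\<omega> - (- cnj \<omega>) = of_real t" unfolding \<omega>_def by (simp add: complex_eq_iff)
    moreover have "\<i> * \<omega> - (- \<i> * cnj \<omega>) = \<i> * of_real t" unfolding \<omega>_def by (simp add: complex_eq_iff)
    ultimately show ?thesis using diff[OF w1 w2] diff[OF w3 w4] by metis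
  qed
  define n :: nat where "n = nat \<lceil>\<bar>Re s\<bar> + \<bar>Im s\<bar>\<rceil> + 1"
  have n1: "real n \<ge> 1" unfolding n_def by simp
  have nb: "real n \<ge> \<bar>Re s\<bar>" "real n \<ge> \<bar>Im s\<bar>" unfolding n_def by linarith+
  define a where "a = Re s / real n"
  define b where "b = Im s / real n"
  have n0: "real n > 0" using n1 by simp
  have "\<bar>a\<bar> = \<bar>Re s\<bar> / real n" unfolding a_def using n0 by (simp add: abs_divide)
  also have "\<dots> \<le> 1" using nb n0 by (simp add: divide_le_eq)
  finally have ab1: "\<bar>a\<bar> \<le> 2" by simp
  have "\<bar>b\<bar> = \<bar>Im s\<bar> / real n" unfolding b_def using n0 by (simp add: abs_divide)
  also have "\<dots> \<le> 1" using nb n0 by (simp add: divide_le_eq)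
  finally have ab2: "\<bar>b\<bar> \<le> 2" by simp
  have na: "real n * a = Re s" and nb': "real n * b = Im s" unfolding a_def b_def using n0 by simp_all
  have "s = of_nat n * of_real a + of_nat n * (\<i> * of_real b)"
  proof (rule complex_eqI)
    show "Re s = Re (of_nat n * of_real a + of_nat n * (\<i> * of_real b))" using na by simp
    show "Im s = Im (of_nat n * of_real a + of_nat n * (\<i> * of_real b))" using nb' by simp
  qed
  hence "s \<cdot>\<^sub>v v = of_nat n \<cdot>\<^sub>v (of_real a \<cdot>\<^sub>v v) + of_nat n \<cdot>\<^sub>v ((\<i> * of_real b) \<cdot>\<^sub>v v)"
    by (simp only: smult_smult_assoc add_smult_distrib_vec)
  thus ?thesis using Y_add Y_nat real_in ab1 ab2 by simp
qed

end


context gsetting begin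

lemma stepB: assumes y: "y \<in> Y" and w: "w \<in> H" "Q w w \<noteq> 0" and w': "w' \<in> H" "Q w' w' \<noteq> 0"
  and w'': "w'' \<in> H" "Q w'' w'' \<noteq> 0" and o1: "Q w' w = 0" and o2: "Q w'' w = 0" and o3: "Q w'' w' = 0"
  and yw: "Q y w \<noteq> 0"
  shows "s \<cdot>\<^sub>v w \<in> Y"
proof -
  have wc: "w \<in> carrier_vec d" and w'c: "w' \<in> carrier_vec d" and w''c: "w'' \<in> carrier_vec d"
    using w w' w'' H_car by auto
  have yc: "y \<in> carrier_vec d" using y Y_car by auto
  have o2': "Q w w'' = 0" using o2 Q_herm[of d \<alpha> w w''] by simp
  have o3': "Q w' w'' = 0" using o3 Q_herm[of d \<alpha> w' w''] by simp
  have m1: "cmod (-1 :: complex) = 1" by simp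
  define k1 where "k1 = R w (-1) * R w' (cnj (-1))"
  have k1D: "k1 \<in> D" unfolding k1_def by (rule RR_D[OF w w' m1])
  define c1 where "c1 = (-1 - 1) / Q w w * Q y w"
  define c2 where "c2 = (cnj (-1) - 1) / Q w' w' * Q y w'"
  have k1y: "k1 *\<^sub>v y = y + c1 \<cdot>\<^sub>v w + c2 \<cdot>\<^sub>v w'"
    unfolding k1_def c1_def c2_def by (rule RR_vec[OF wc w'c o1 yc])
  define z1 where "z1 = k1 *\<^sub>v y - y"
  have z1Y: "z1 \<in> Y" unfolding z1_def using Y_diff[OF k1D y] .
  have z1c: "z1 \<in> carrier_vec d" using z1Y Y_car by auto
  have z1eq: "z1 = c1 \<cdot>\<^sub>v w + c2 \<cdot>\<^sub>v w'" unfolding z1_def k1y using yc wc w'c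
    by (intro eq_vecI) auto
  have Qz1w: "Q z1 w = -2 * Q y w"
  proof -
    have "Q z1 w = c1 * Q w w + c2 * Q w' w" unfolding z1eq using wc w'c by (simp add: Q_add_left Q_smult_left)
    thus ?thesis using o1 w(2) unfolding c1_def by simp
  qed
  have Qz1w'': "Q z1 w'' = 0"
    unfolding z1eq using wc w'c o2' o3' by (simp add: Q_add_left Q_smult_left)
  define v where "v = (-2 * Q y w / Q w w) \<cdot>\<^sub>v w"
  have vc: "v \<in> carrier_vec d" unfolding v_def using wc by simp
  have "(\<omega> - 1) \<cdot>\<^sub>v v \<in> Y" if om: "cmod \<omega> = 1" for \<omega>
  proof -
    define k2 where "k2 = R w \<omega> * R w'' (cnj \<omega>)"
    have k2D: "k2 \<in> D" unfolding k2_def by (rule RR_D[OF w w'' om])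
    have k2z: "k2 *\<^sub>v z1 = z1 + ((\<omega> - 1) / Q w w * Q z1 w) \<cdot>\<^sub>v w + ((cnj \<omega> - 1) / Q w'' w'' * Q z1 w'') \<cdot>\<^sub>v w''"
      unfolding k2_def by (rule RR_vec[OF wc w''c o2 z1c])
    have "k2 *\<^sub>v z1 - z1 = (\<omega> - 1) \<cdot>\<^sub>v v"
      unfolding k2z Qz1w Qz1w'' v_def using z1c wc w''c w(2)
      by (intro eq_vecI) (auto simp: field_simps)
    thus ?thesis using Y_diff[OF k2D z1Y] by simp
  qed
  hence all: "t \<cdot>\<^sub>v v \<in> Y" for t using Y_units[OF vc] by blast
  have nz: "-2 * Q y w / Q w w \<noteq> 0" using yw w(2) by simp
  have "s \<cdot>\<^sub>v w = (s / (-2 * Q y w / Q w w)) \<cdot>\<^sub>v v" unfolding v_def smult_smult_assoc using nz by simp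
  thus ?thesis using all by simp
qed

lemma triple: assumes v: "v \<in> H" "Q v v \<noteq> 0"
  shows "\<exists>w' w''. w' \<in> H \<and> Q w' w' \<noteq> 0 \<and> w'' \<in> H \<and> Q w'' w'' \<noteq> 0 \<and> Q w' v = 0 \<and> Q w'' v = 0 \<and> Q w'' w' = 0"
proof -
  have z: "0\<^sub>v d \<in> H" unfolding hypH_def using d0 by simp
  obtain w' where w': "w' \<in> H" "Q w' w' \<noteq> 0" "Q w' v = 0"
    using exists_perp[OF v(1) z] v(2) by (auto simp: Q_zero_right)
  have vw': "Q v w' = 0" using w'(3) Q_herm[of d \<alpha> v w'] by simp
  obtain w'' where w'': "w'' \<in> H" "Q w'' w'' \<noteq> 0" "Q w'' v = 0" "Q w'' w' = 0"
    using exists_perp[OF v(1) w'(1) vw'] v(2) w'(2) by auto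
  show ?thesis using w' w'' by blast
qed

end


context gsetting begin

lemma one_smult: "v \<in> carrier_vec d \<Longrightarrow> (1::complex) \<cdot>\<^sub>v v = v" by (intro eq_vecI) auto

lemma Y_H: assumes y0: "y0 \<in> Y" "y0 \<in> H" "y0 \<noteq> 0\<^sub>v d" and v: "v \<in> H" shows "v \<in> Y"
proof -
  have z: "0\<^sub>v d \<in> H" unfolding hypH_def using d0 by simp
  obtain h where h: "h \<in> H" "Q y0 h \<noteq> 0" using nondeg[OF y0(2)] y0(3) by blast
  obtain u0 where u0: "u0 \<in> H" "Q u0 u0 \<noteq> 0"
    using exists_perp[OF z z] by (auto simp: Q_zero_right)
  have hc: "h \<in> carrier_vec d" and u0c: "u0 \<in> carrier_vec d" using h u0 H_car by auto
  obtain s where s: "Q (h + complex_of_real s \<cdot>\<^sub>v u0) (h + complex_of_real s \<cdot>\<^sub>v u0) \<noteq> 0"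
    "Q y0 h + complex_of_real s * Q y0 u0 \<noteq> 0"
    using L_vec[OF u0c u0(2) hc, of "Q y0 h" "Q y0 u0"] h(2) by blast
  define w0 where "w0 = h + complex_of_real s \<cdot>\<^sub>v u0"
  have w0H: "w0 \<in> H" unfolding w0_def using h u0 H_add H_smult by blast
  have w0c: "w0 \<in> carrier_vec d" using w0H H_car by auto
  have qw0: "Q w0 w0 \<noteq> 0" using s(1) unfolding w0_def .
  have yw0: "Q y0 w0 \<noteq> 0" unfolding w0_def using s(2) hc u0c by (simp add: Q_add_right Q_smult_right)
  obtain w' w'' where t: "w' \<in> H" "Q w' w' \<noteq> 0" "w'' \<in> H" "Q w'' w'' \<noteq> 0" "Q w' w0 = 0" "Q w'' w0 = 0" "Q w'' w' = 0"
    using triple[OF w0H qw0] by blast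
  have w0Y: "t \<cdot>\<^sub>v w0 \<in> Y" for t using stepB[OF y0(1) w0H qw0 t yw0] .
  have vc: "v \<in> carrier_vec d" using v H_car by auto
  obtain s' where s': "Q (v + complex_of_real s' \<cdot>\<^sub>v w0) (v + complex_of_real s' \<cdot>\<^sub>v w0) \<noteq> 0"
    "Q w0 v + complex_of_real s' * Q w0 w0 \<noteq> 0"
    using L_vec[OF w0c qw0 vc, of "Q w0 v" "Q w0 w0"] qw0 by blast
  define v' where "v' = v + complex_of_real s' \<cdot>\<^sub>v w0"
  have v'H: "v' \<in> H" unfolding v'_def using v w0H H_add H_smult by blast
  have v'c: "v' \<in> carrier_vec d" using v'H H_car by auto
  have qv': "Q v' v' \<noteq> 0" using s'(1) unfolding v'_def .
  have wv': "Q w0 v' \<noteq> 0" unfolding v'_def using s'(2) vc w0c by (simp add: Q_add_right Q_smult_right)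
  obtain x' x'' where t': "x' \<in> H" "Q x' x' \<noteq> 0" "x'' \<in> H" "Q x'' x'' \<noteq> 0" "Q x' v' = 0" "Q x'' v' = 0" "Q x'' x' = 0"
    using triple[OF v'H qv'] by blast
  have w0Y1: "w0 \<in> Y" using w0Y[of 1] one_smult[OF w0c] by simp
  have "1 \<cdot>\<^sub>v v' \<in> Y" using stepB[OF w0Y1 v'H qv' t' wv'] .
  hence v'Y: "v' \<in> Y" using one_smult[OF v'c] by simp
  have "v = v' - complex_of_real s' \<cdot>\<^sub>v w0" unfolding v'_def using vc w0c by (intro eq_vecI) auto
  thus ?thesis using Y_sub[OF v'Y w0Y] by simp
qed

lemma Y_all: assumes y0: "y0 \<in> Y" "y0 \<in> H" "y0 \<noteq> 0\<^sub>v d" and v: "v \<in> carrier_vec d" shows "v \<in> Y"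
proof -
  have "proj v \<in> Y" using Y_H[OF y0 proj_H[OF v]] .
  moreover have "N v = N (proj v)" by (rule N_eq) (simp add: Q_proj_right v)
  ultimately show ?thesis using v unfolding Y_def by simp
qed

lemma main: "G = D \<or> G = S"
proof (cases "G = D")
  case True thus ?thesis by simp
next
  case False
  then obtain h where hG: "h \<in> G" and hD: "h \<notin> D" using DG by blast
  have hS: "h \<in> S" using hG GS by auto
  obtain y where yc: "y \<in> carrier_vec d" and yD: "N y * h \<in> D" using decomp[OF hS] by blast
  have NyS: "N y \<in> S" using N_S[OF yc] .
  have "N y = N y * h * inv\<^bsub>SG\<^esub> h"
    using assoc_S[OF NyS hS inv_S[OF hS]] r_inv_S[OF hS] one_r[OF NyS] by simp
  moreover have "N y * h * inv\<^bsub>SG\<^esub> h \<in> G" using G_mult[OF _ G_inv[OF hG]] yD DG by auto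
  ultimately have yY: "y \<in> Y" unfolding Y_def using yc by simp
  have pY: "proj y \<in> Y"
  proof -
    have "N (proj y) = N y" by (rule N_eq) (simp add: Q_proj_right yc)
    thus ?thesis using yY proj_car[OF yc] unfolding Y_def by simp
  qed
  have p0: "proj y \<noteq> 0\<^sub>v d"
  proof
    assume "proj y = 0\<^sub>v d"
    moreover have "N y = N (proj y)" by (rule N_eq) (simp add: Q_proj_right yc)
    ultimately have "N y = N (0\<^sub>v d)" by simp
    hence "N y = 1\<^sub>m d" using N0 by simp
    hence "N y * h = h" using one_l[OF hS] by simp
    thus False using yD hD by simp
  qed
  have allY: "v \<in> Y" if "v \<in> carrier_vec d" for v using Y_all[OF pY proj_H[OF yc] p0 that] .
  have "S \<subseteq> G"
  proof
    fix g assume gS: "g \<in> S"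
    obtain z where zc: "z \<in> carrier_vec d" and zD: "N z * g \<in> D" using decomp[OF gS] by blast
    have NzS: "N z \<in> S" using N_S[OF zc] .
    have "- z \<in> Y" using allY zc by simp
    hence nG: "N (- z) \<in> G" unfolding Y_def by simp
    have "N (- z) * (N z * g) = g"
      using assoc_S[OF N_S[of "- z"] NzS gS] N_neg[OF zc] one_l[OF gS] zc by simp
    moreover have "N (- z) * (N z * g) \<in> G" using G_mult[OF nG] zD DG by auto
    ultimately show "g \<in> G" by simp
  qed
  thus ?thesis using GS by auto
qed

end

theorem mainTheorem7:
  fixes d :: nat and \<alpha> :: real and e :: "complex vec" and G :: "complex mat set"
  assumes "d \<ge> 4" and "0 < \<alpha>" and "\<alpha> < 1/2"
    and "real (d + 1) * \<alpha> \<in> \<int>"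
    and "e \<in> carrier_vec d" and "e \<noteq> 0\<^sub>v d"
    and "kerQ d \<alpha> = {c \<cdot>\<^sub>v e | c. True}"
    and "subgroup G (SUstar_group d \<alpha> e)"
    and "Dgrp d \<alpha> e \<subseteq> G"
  shows "G = Dgrp d \<alpha> e \<or> G = SUstar d \<alpha> e"
proof -
  have z: "1 + zeta \<alpha> \<noteq> 0" using zeta_ne assms(2,3) by blast
  have "gsetting d \<alpha> e G"
    by (intro gsetting.intro setting.intro gsetting_axioms.intro)
       (use assms cc_sum[OF z] cc_nz[OF z] in simp_all)
  thus ?thesis by (rule gsetting.main)
qed


end
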